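(* Let $\Phi:[a,b]\to\mathbb{C}$ be continuous and nowhere zero. For integers $n,m\ge1$ and $x_0,x\in[a,b]$, $$\big((\Phi X^{(2n-1)})\star X^{(2m)}\big)(x_0,x)=A_{n,m}X^{(2n+2m)}(x_0,x),\qquad \Big(\big(\tfrac{1}{\Phi}\widetilde X^{(2n-1)}\big)\star\widetilde X^{(2m)}\Big)(x_0,x)=A_{n,m}\widetilde X^{(2n+2m)}(x_0,x),$$ $$\big((\Phi X^{(2n-1)})\star X^{(2m-1)}\big)(x_0,x)=B_{n,m}X^{(2n+2m-1)}(x_0,x),\qquad \Big(\big(\tfrac{1}{\Phi}\widetilde X^{(2n-1)}\big)\star\widetilde X^{(2m-1)}\Big)(x_0,x)=B_{n,m}\widetilde X^{(2n+2m-1)}(x_0,x),$$ where $A_{n,m}=\frac{(2n-1)!(2m)!}{(2n+2m)!}$ and $B_{n,m}=\frac{(2n-1)!(2m-1)!}{(2n+2m-1)!}$.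
   Context: For $s,x\in[a,b]$ the $\Phi$-power functions are defined recursively by $X^{(0)}(s,x)\equiv 1$, $\widetilde X^{(0)}(s,x)\equiv 1$ and, for $n\ge 1$, $$X^{(n)}(s,x)=n\int_{s}^x X^{(n-1)}(s,\xi)\,\big(\Phi(\xi)\big)^{(-1)^n}\,d\xi,\qquad \widetilde X^{(n)}(s,x)=n\int_{s}^x \widetilde X^{(n-1)}(s,\xi)\,\Big(\frac{1}{\Phi(\xi)}\Big)^{(-1)^n}\,d\xi.$$ The Volterra composition (of the first type) of two-variable functions is $(f\star g)(x,y)=\int_x^y f(x,\xi)\,g(\xi,y)\,d\xi$. Here $\Phi X^{(k)}$ denotes the two-variable function $(s,x)\mapsto\Phi(x)X^{(k)}(s,x)$ and $\frac1\Phi\widetilde X^{(k)}$ denotes $(s,x)\mapsto\frac{1}{\Phi(x)}\widetilde X^{(k)}(s,x)$. *)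

theory Defs
  imports "HOL-Analysis.Analysis"
begin

definition oint :: "real \<Rightarrow> real \<Rightarrow> (real \<Rightarrow> complex) \<Rightarrow> complex" where
  "oint s x f = (if s \<le> x then integral {s..x} f else - integral {x..s} f)"

fun Xpow :: "(real \<Rightarrow> complex) \<Rightarrow> nat \<Rightarrow> real \<Rightarrow> real \<Rightarrow> complex" where
  "Xpow \<Phi> 0 s x = 1"
| "Xpow \<Phi> (Suc n) s x =
     of_nat (Suc n) * oint s x (\<lambda>\<xi>. Xpow \<Phi> n s \<xi> *
        (if even (Suc n) then \<Phi> \<xi> else 1 / \<Phi> \<xi>))"

definition Xtilde :: "(real \<Rightarrow> complex) \<Rightarrow> nat \<Rightarrow> real \<Rightarrow> real \<Rightarrow> complex" where
  "Xtilde \<Phi> n = Xpow (\<lambda>\<xi>. 1 / \<Phi> \<xi>) n"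

definition volterra :: "(real \<Rightarrow> real \<Rightarrow> complex) \<Rightarrow> (real \<Rightarrow> real \<Rightarrow> complex) \<Rightarrow> real \<Rightarrow> real \<Rightarrow> complex" where
  "volterra f g x y = oint x y (\<lambda>\<xi>. f x \<xi> * g \<xi> y)"

end

theory Submission
  imports Defs
begin

lemma tri_fubini:
  fixes h :: "real \<Rightarrow> real \<Rightarrow> complex"
  assumes pq: "p \<le> q" and hc: "continuous_on ({p..q}\<times>{p..q}) (\<lambda>(u,v). h u v)"
  shows "integral {p..q} (\<lambda>u. integral {u..q} (h u)) = integral {p..q} (\<lambda>v. integral {p..v} (\<lambda>u. h u v))"
proof -
  define T where "T = {(u::real,v::real). p \<le> u \<and> u \<le> v \<and> v \<le> q}"
  have TS: "T \<subseteq> {p..q}\<times>{p..q}" unfolding T_def by auto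
  have Teq: "T = {x. p \<le> fst x \<and> fst x \<le> snd x \<and> snd x \<le> q}" unfolding T_def by auto
  have "closed T" unfolding Teq
    by (intro closed_Collect_conj closed_Collect_le continuous_intros)
  moreover have "bounded T" 
    by (meson TS bounded_subset compact_Icc compact_Times compact_imp_bounded)
  ultimately have cT: "compact T" by (simp add: compact_eq_bounded_closed)
  define f where "f u v = indicator T (u,v) *\<^sub>R h u v" for u v
  have int: "integrable lborel (\<lambda>x. indicator T x *\<^sub>R (\<lambda>(u,v). h u v) x)"
    by (rule borel_integrable_compact[OF cT continuous_on_subset[OF hc TS]])
  have int2: "integrable (lborel \<Otimes>\<^sub>M lborel) (case_prod f)"
    using int unfolding lborel_prod f_def case_prod_beta' by simp
  have F: "(\<integral>v. (\<integral>u. f u v \<partial>lborel) \<partial>lborel) = (\<integral>u. (\<integral>v. f u v \<partial>lborel) \<partial>lborel)"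
    by (rule lborel_pair.Fubini_integral[OF int2])
  have i1: "(\<integral>v. f u v \<partial>lborel) = indicator {p..q} u *\<^sub>R integral {u..q} (h u)" for u
  proof (cases "u \<in> {p..q}")
    case True
    have c: "continuous_on {u..q} (h u)"
      by (rule continuous_on_compose2[OF hc, of _ "\<lambda>v. (u,v)", simplified])
         (use True in \<open>auto intro!: continuous_intros\<close>)
    have "(\<integral>v. f u v \<partial>lborel) = (LINT v:{u..q}|lborel. h u v)"
      unfolding set_lebesgue_integral_def f_def T_def using True
      by (intro Bochner_Integration.integral_cong) (auto simp: indicator_def)
    also have "\<dots> = integral {u..q} (h u)"
      by (rule set_borel_integral_eq_integral(2)[OF borel_integrable_atLeastAtMost'[OF c]])
    finally show ?thesis using True by simp
  next
    case False
    then have "f u v = 0" for v unfolding f_def T_def by (auto simp: indicator_def)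
    then show ?thesis using False by simp
  qed
  have i2: "(\<integral>u. f u v \<partial>lborel) = indicator {p..q} v *\<^sub>R integral {p..v} (\<lambda>u. h u v)" for v
  proof (cases "v \<in> {p..q}")
    case True
    have c: "continuous_on {p..v} (\<lambda>u. h u v)"
      by (rule continuous_on_compose2[OF hc, of _ "\<lambda>u. (u,v)", simplified])
         (use True in \<open>auto intro!: continuous_intros\<close>)
    have "(\<integral>u. f u v \<partial>lborel) = (LINT u:{p..v}|lborel. h u v)"
      unfolding set_lebesgue_integral_def f_def T_def using True
      by (intro Bochner_Integration.integral_cong) (auto simp: indicator_def)
    also have "\<dots> = integral {p..v} (\<lambda>u. h u v)"
      by (rule set_borel_integral_eq_integral(2)[OF borel_integrable_atLeastAtMost'[OF c]])
    finally show ?thesis using True by simp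
  next
    case False
    then have "f u v = 0" for u unfolding f_def T_def by (auto simp: indicator_def)
    then show ?thesis using False by simp
  qed
  have I1: "integrable lborel (\<lambda>u. \<integral>v. f u v \<partial>lborel)"
    by (rule lborel_pair.integrable_fst[OF int2])
  have I2: "integrable lborel (\<lambda>v. \<integral>u. f u v \<partial>lborel)"
    by (rule lborel_pair.integrable_snd[OF int2])
  have s1: "set_integrable lborel {p..q} (\<lambda>u. integral {u..q} (h u))"
    using I1 unfolding set_integrable_def i1 .
  have s2: "set_integrable lborel {p..q} (\<lambda>v. integral {p..v} (\<lambda>u. h u v))"
    using I2 unfolding set_integrable_def i2 .
  have "integral {p..q} (\<lambda>u. integral {u..q} (h u)) = (\<integral>u. (\<integral>v. f u v \<partial>lborel) \<partial>lborel)"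
    unfolding i1 set_borel_integral_eq_integral(2)[OF s1, symmetric] set_lebesgue_integral_def ..
  also have "\<dots> = (\<integral>v. (\<integral>u. f u v \<partial>lborel) \<partial>lborel)" using F by simp
  also have "\<dots> = integral {p..q} (\<lambda>v. integral {p..v} (\<lambda>u. h u v))"
    unfolding i2 set_borel_integral_eq_integral(2)[OF s2, symmetric] set_lebesgue_integral_def ..
  finally show ?thesis .
qed


lemma oint_alt: "oint s x F = integral {s..x} F - integral {x..s} F"
  unfolding oint_def by (cases "s < x"; cases "s = x") auto

lemma oint_cmult: "oint s x (\<lambda>t. c * F t) = c * oint s x F"
  unfolding oint_def by auto

lemma oint_multc: "oint s x (\<lambda>t. F t * c) = oint s x F * c"
  unfolding oint_def by auto

lemma oint_cong:
  assumes "\<And>t. t \<in> {min s x..max s x} \<Longrightarrow> F t = G t"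
  shows "oint s x F = oint s x G"
  unfolding oint_def using assms
  by (auto intro!: integral_cong)

lemma conv01:
  fixes a b s x u :: real
  assumes "s \<in> {a..b}" "x \<in> {a..b}" "u \<in> {0..1}"
  shows "s + u*(x-s) \<in> {a..b}"
proof -
  have e: "s + u * (x - s) = (1 - u) * s + u * x" by (simp add: algebra_simps)
  have "(1 - u) * a \<le> (1 - u) * s" "u * a \<le> u * x" "(1 - u) * s \<le> (1 - u) * b" "u * x \<le> u * b"
    using assms by (auto intro!: mult_left_mono)
  then show ?thesis unfolding e by (auto simp: algebra_simps)
qed

lemma oint_param:
  fixes G :: "real \<Rightarrow> complex"
  assumes G: "continuous_on {c..d} G" and s: "s \<in> {c..d}" and x: "x \<in> {c..d}"
  shows "oint s x G = integral {0..1} (\<lambda>u. (x - s) *\<^sub>R G (s + u*(x-s)))"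
proof -
  have sub: "(\<lambda>u. s + u*(x-s)) ` {0..1} \<subseteq> {c..d}"
    using conv01[OF s x] by auto
  have "((\<lambda>u. (x-s) *\<^sub>R G (s + u*(x-s))) has_integral (integral {s..x} G - integral {x..s} G)) {0..1}"
    by (rule has_integral_substitution_general[of "{}" 0 1 "\<lambda>u. s+u*(x-s)" c d G "\<lambda>_. x - s", OF _ _ sub G, simplified])
      (auto intro!: continuous_intros derivative_eq_intros)
  then show ?thesis unfolding oint_alt by (rule integral_unique[symmetric])
qed

lemma w_cont:
  fixes \<Psi> :: "real \<Rightarrow> complex"
  assumes "continuous_on {a..b} \<Psi>" "\<forall>t\<in>{a..b}. \<Psi> t \<noteq> 0"
  shows "continuous_on {a..b} (\<lambda>\<xi>. if even j then \<Psi> \<xi> else 1 / \<Psi> \<xi>)"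
  using assms by (cases "even j") (auto intro!: continuous_intros)

lemma Xcont:
  fixes \<Psi> :: "real \<Rightarrow> complex"
  assumes cont: "continuous_on {a..b} \<Psi>" and nz: "\<forall>t\<in>{a..b}. \<Psi> t \<noteq> 0"
  shows "continuous_on ({a..b}\<times>{a..b}) (\<lambda>z. Xpow \<Psi> k (fst z) (snd z))"
proof (induction k)
  case 0
  then show ?case by (simp add: continuous_on_const)
next
  case (Suc k)
  define w where "w = (\<lambda>\<xi>. if even (Suc k) then \<Psi> \<xi> else 1 / \<Psi> \<xi>)"
  have wc: "continuous_on {a..b} w" unfolding w_def by (rule w_cont[OF cont nz])
  define K where "K z = Xpow \<Psi> k (fst z) (snd z) * w (snd z)" for z
  have Kc: "continuous_on ({a..b}\<times>{a..b}) K"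
    unfolding K_def
    by (intro continuous_on_mult Suc.IH continuous_on_compose2[OF wc continuous_on_snd]) auto
  have eq: "Xpow \<Psi> (Suc k) (fst z) (snd z) = of_nat (Suc k) *
     integral (cbox 0 1) (\<lambda>u. (snd z - fst z) *\<^sub>R K (fst z, fst z + u*(snd z - fst z)))"
    if z: "z \<in> {a..b}\<times>{a..b}" for z
  proof -
    obtain s x where zz: "z = (s,x)" by force
    have s: "s \<in> {a..b}" and x: "x \<in> {a..b}" using z zz by auto
    have Gc: "continuous_on {a..b} (\<lambda>\<xi>. K (s,\<xi>))"
      by (rule continuous_on_compose2[OF Kc, of _ "\<lambda>\<xi>. (s,\<xi>)"]) (use s in \<open>auto intro!: continuous_intros\<close>)
    have "Xpow \<Psi> (Suc k) s x = of_nat (Suc k) * oint s x (\<lambda>\<xi>. K (s,\<xi>))"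
      by (simp add: K_def w_def)
    also have "\<dots> = of_nat (Suc k) * integral {0..1} (\<lambda>u. (x - s) *\<^sub>R K (s, s + u*(x-s)))"
      by (simp add: oint_param[OF Gc s x])
    finally show ?thesis using zz by simp
  qed
  have pc: "continuous_on (({a..b}\<times>{a..b}) \<times> cbox 0 1)
      (\<lambda>(z, u). (snd z - fst z) *\<^sub>R K (fst z, fst z + u*(snd z - fst z)))"
    unfolding case_prod_beta'
    apply (intro continuous_on_scaleR continuous_intros continuous_on_compose2[OF Kc])
    using conv01 by auto
  show ?case
    apply (rule continuous_on_cong[OF refl eq, THEN iffD2], assumption)
    apply (intro continuous_on_mult continuous_on_const)
    apply (rule integral_continuous_on_param[OF pc])
    done
qed

lemma Xcont1:
  fixes \<Psi> :: "real \<Rightarrow> complex"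
  assumes cont: "continuous_on {a..b} \<Psi>" and nz: "\<forall>t\<in>{a..b}. \<Psi> t \<noteq> 0" and s: "s \<in> {a..b}"
  shows "continuous_on {a..b} (\<lambda>\<xi>. Xpow \<Psi> k s \<xi>)"
  by (rule continuous_on_compose2[OF Xcont[OF cont nz], of _ "\<lambda>\<xi>. (s,\<xi>)", simplified])
     (use s in \<open>auto intro!: continuous_intros\<close>)

lemma ofub:
  fixes h :: "real \<Rightarrow> real \<Rightarrow> complex"
  assumes hc: "continuous_on ({a..b}\<times>{a..b}) (\<lambda>z. h (fst z) (snd z))"
    and x0: "x0 \<in> {a..b}" and x: "x \<in> {a..b}"
  shows "oint x0 x (\<lambda>\<xi>. oint \<xi> x (\<lambda>t. h \<xi> t)) = oint x0 x (\<lambda>t. oint x0 t (\<lambda>\<xi>. h \<xi> t))"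
proof (cases "x0 \<le> x")
  case True
  have hc': "continuous_on ({x0..x}\<times>{x0..x}) (\<lambda>(u,v). h u v)"
    unfolding case_prod_beta' by (rule continuous_on_subset[OF hc]) (use x0 x in auto)
  have "oint x0 x (\<lambda>\<xi>. oint \<xi> x (\<lambda>t. h \<xi> t)) = integral {x0..x} (\<lambda>\<xi>. integral {\<xi>..x} (h \<xi>))"
    using True by (auto simp: oint_def intro!: integral_cong)
  also have "\<dots> = integral {x0..x} (\<lambda>t. integral {x0..t} (\<lambda>\<xi>. h \<xi> t))"
    by (rule tri_fubini[OF True hc'])
  also have "\<dots> = oint x0 x (\<lambda>t. oint x0 t (\<lambda>\<xi>. h \<xi> t))"
    using True by (auto simp: oint_def intro!: integral_cong)
  finally show ?thesis .
next
  case False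
  then have le: "x \<le> x0" by simp
  have hc': "continuous_on ({x..x0}\<times>{x..x0}) (\<lambda>(u,v). h v u)"
    unfolding case_prod_beta'
    by (rule continuous_on_compose2[OF hc, of _ "\<lambda>z. (snd z, fst z)", simplified])
       (use x0 x in \<open>auto intro!: continuous_intros\<close>)
  have "oint x0 x (\<lambda>\<xi>. oint \<xi> x (\<lambda>t. h \<xi> t)) = - integral {x..x0} (\<lambda>\<xi>. oint \<xi> x (\<lambda>t. h \<xi> t))"
    using False by (simp add: oint_def)
  also have "\<dots> = integral {x..x0} (\<lambda>\<xi>. integral {x..\<xi>} (h \<xi>))"
  proof -
    have "integral {x..x0} (\<lambda>\<xi>. oint \<xi> x (\<lambda>t. h \<xi> t)) = integral {x..x0} (\<lambda>\<xi>. - integral {x..\<xi>} (h \<xi>))"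
      by (rule integral_cong) (auto simp: oint_def)
    then show ?thesis by simp
  qed
  also have "\<dots> = integral {x..x0} (\<lambda>t. integral {t..x0} (\<lambda>\<xi>. h \<xi> t))"
    by (rule tri_fubini[OF le hc', symmetric])
  also have "\<dots> = - integral {x..x0} (\<lambda>t. oint x0 t (\<lambda>\<xi>. h \<xi> t))"
  proof -
    have "integral {x..x0} (\<lambda>t. oint x0 t (\<lambda>\<xi>. h \<xi> t)) = integral {x..x0} (\<lambda>t. - integral {t..x0} (\<lambda>\<xi>. h \<xi> t))"
      by (rule integral_cong) (auto simp: oint_def)
    then show ?thesis by simp
  qed
  also have "\<dots> = oint x0 x (\<lambda>t. oint x0 t (\<lambda>\<xi>. h \<xi> t))"
    using False by (simp add: oint_def)
  finally show ?thesis .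
qed

lemma mainlem:
  fixes \<Psi> :: "real \<Rightarrow> complex"
  assumes cont: "continuous_on {a..b} \<Psi>" and nz: "\<forall>t\<in>{a..b}. \<Psi> t \<noteq> 0"
    and p: "odd p" and x0: "x0 \<in> {a..b}"
  shows "x \<in> {a..b} \<Longrightarrow> volterra (\<lambda>s y. \<Psi> y * Xpow \<Psi> p s y) (Xpow \<Psi> k) x0 x
      = complex_of_real (fact p * fact k / fact (p+1+k)) * Xpow \<Psi> (p+1+k) x0 x"
proof (induction k arbitrary: x)
  case 0
  define I where "I = oint x0 x (\<lambda>\<xi>. \<Psi> \<xi> * Xpow \<Psi> p x0 \<xi>)"
  have V: "volterra (\<lambda>s y. \<Psi> y * Xpow \<Psi> p s y) (Xpow \<Psi> 0) x0 x = I"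
    unfolding volterra_def I_def by simp
  have X: "Xpow \<Psi> (p+1+0) x0 x = of_nat (Suc p) * I"
    unfolding I_def using p by (simp add: mult.commute)
  have r: "fact p * fact 0 / fact (p+1+0) * real (Suc p) = 1"
    by (simp add: fact_Suc del: of_nat_Suc)
  have "complex_of_real (fact p * fact 0 / fact (p+1+0)) * of_nat (Suc p) = 1"
    using arg_cong[OF r, of complex_of_real] by (simp del: of_nat_Suc)
  then show ?case unfolding V X by (simp add: mult.assoc[symmetric] del: of_nat_Suc)
next
  case (Suc k)
  define w where "w = (\<lambda>\<xi>. if even (Suc k) then \<Psi> \<xi> else 1 / \<Psi> \<xi>)"
  have wc: "continuous_on {a..b} w" unfolding w_def by (rule w_cont[OF cont nz])
  define h where "h \<xi> t = \<Psi> \<xi> * Xpow \<Psi> p x0 \<xi> * Xpow \<Psi> k \<xi> t * w t" for \<xi> t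
  have hc: "continuous_on ({a..b}\<times>{a..b}) (\<lambda>z. h (fst z) (snd z))"
    unfolding h_def
    by (intro continuous_on_mult Xcont[OF cont nz]
        continuous_on_compose2[OF wc continuous_on_snd]
        continuous_on_compose2[OF cont continuous_on_fst]
        continuous_on_compose2[OF Xcont1[OF cont nz x0] continuous_on_fst]) auto
  have "volterra (\<lambda>s y. \<Psi> y * Xpow \<Psi> p s y) (Xpow \<Psi> (Suc k)) x0 x
      = oint x0 x (\<lambda>\<xi>. of_nat (Suc k) * oint \<xi> x (\<lambda>t. h \<xi> t))"
    unfolding volterra_def h_def w_def
    by (simp add: oint_cmult[symmetric] mult.assoc mult.left_commute)
  also have "\<dots> = of_nat (Suc k) * oint x0 x (\<lambda>\<xi>. oint \<xi> x (\<lambda>t. h \<xi> t))"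
    by (rule oint_cmult)
  also have "oint x0 x (\<lambda>\<xi>. oint \<xi> x (\<lambda>t. h \<xi> t)) = oint x0 x (\<lambda>t. oint x0 t (\<lambda>\<xi>. h \<xi> t))"
    by (rule ofub[OF hc x0 Suc.prems])
  also have "\<dots> = oint x0 x (\<lambda>t. complex_of_real (fact p * fact k / fact (p+1+k)) * Xpow \<Psi> (p+1+k) x0 t * w t)"
  proof (rule oint_cong)
    fix t assume t: "t \<in> {min x0 x..max x0 x}"
    then have ta: "t \<in> {a..b}" using x0 Suc.prems by auto
    have "oint x0 t (\<lambda>\<xi>. h \<xi> t) = volterra (\<lambda>s y. \<Psi> y * Xpow \<Psi> p s y) (Xpow \<Psi> k) x0 t * w t"
      unfolding volterra_def h_def by (simp add: oint_multc[symmetric] mult.assoc)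
    then show "oint x0 t (\<lambda>\<xi>. h \<xi> t) = complex_of_real (fact p * fact k / fact (p+1+k)) * Xpow \<Psi> (p+1+k) x0 t * w t"
      using Suc.IH[OF ta] by simp
  qed
  also have "\<dots> = complex_of_real (fact p * fact k / fact (p+1+k)) * oint x0 x (\<lambda>t. Xpow \<Psi> (p+1+k) x0 t * w t)"
    unfolding mult.assoc by (rule oint_cmult)
  finally have L: "volterra (\<lambda>s y. \<Psi> y * Xpow \<Psi> p s y) (Xpow \<Psi> (Suc k)) x0 x =
     of_nat (Suc k) * (complex_of_real (fact p * fact k / fact (p+1+k)) * oint x0 x (\<lambda>t. Xpow \<Psi> (p+1+k) x0 t * w t))" .
  have ev: "even (Suc (p+1+k)) = even (Suc k)" using p by simp
  have R: "Xpow \<Psi> (p+1+Suc k) x0 x = of_nat (Suc (p+1+k)) * oint x0 x (\<lambda>t. Xpow \<Psi> (p+1+k) x0 t * w t)"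
    unfolding w_def using ev by simp
  have c: "real (Suc k) * (fact p * fact k / fact (p+1+k)) = fact p * fact (Suc k) / fact (p+1+Suc k) * real (Suc (p+1+k))"
    by (simp add: field_simps del: of_nat_Suc)
  show ?case unfolding L R
  proof -
    have "complex_of_real (real (Suc k) * (fact p * fact k / fact (p+1+k))) = complex_of_real (fact p * fact (Suc k) / fact (p+1+Suc k) * real (Suc (p+1+k)))"
      using c by simp
    then show "of_nat (Suc k) * (complex_of_real (fact p * fact k / fact (p+1+k)) * oint x0 x (\<lambda>t. Xpow \<Psi> (p+1+k) x0 t * w t)) =
      complex_of_real (fact p * fact (Suc k) / fact (p+1+Suc k)) * (of_nat (Suc (p+1+k)) * oint x0 x (\<lambda>t. Xpow \<Psi> (p+1+k) x0 t * w t))"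
      by (simp only: of_real_mult of_real_of_nat_eq mult.assoc[symmetric])
  qed
qed


theorem proposition5:
  fixes \<Phi> :: "real \<Rightarrow> complex" and a b x0 x :: real and n m :: nat
  assumes "continuous_on {a..b} \<Phi>"
    and "\<forall>t\<in>{a..b}. \<Phi> t \<noteq> 0"
    and "n \<ge> 1" and "m \<ge> 1"
    and "x0 \<in> {a..b}" and "x \<in> {a..b}"
  defines "A \<equiv> complex_of_real (fact (2*n-1) * fact (2*m) / fact (2*n+2*m))"
    and "B \<equiv> complex_of_real (fact (2*n-1) * fact (2*m-1) / fact (2*n+2*m-1))"
  shows "volterra (\<lambda>s y. \<Phi> y * Xpow \<Phi> (2*n-1) s y) (Xpow \<Phi> (2*m)) x0 x
           = A * Xpow \<Phi> (2*n+2*m) x0 x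
    \<and> volterra (\<lambda>s y. (1 / \<Phi> y) * Xtilde \<Phi> (2*n-1) s y) (Xtilde \<Phi> (2*m)) x0 x
           = A * Xtilde \<Phi> (2*n+2*m) x0 x
    \<and> volterra (\<lambda>s y. \<Phi> y * Xpow \<Phi> (2*n-1) s y) (Xpow \<Phi> (2*m-1)) x0 x
           = B * Xpow \<Phi> (2*n+2*m-1) x0 x
    \<and> volterra (\<lambda>s y. (1 / \<Phi> y) * Xtilde \<Phi> (2*n-1) s y) (Xtilde \<Phi> (2*m-1)) x0 x
           = B * Xtilde \<Phi> (2*n+2*m-1) x0 x"
proof -
  have c2: "continuous_on {a..b} (\<lambda>t. 1 / \<Phi> t)" using assms(1,2) by (auto intro!: continuous_intros)
  have n2: "\<forall>t\<in>{a..b}. 1 / \<Phi> t \<noteq> 0" using assms(2) by auto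
  have p: "odd (2*n-1)" using assms(3) by presburger
  have e1: "2*n-1+1+2*m = 2*n+2*m" using assms(3) by simp
  have e2: "2*n-1+1+(2*m-1) = 2*n+2*m-1" using assms(3,4) by simp
  note M1 = mainlem[OF assms(1,2) p assms(5,6)]
  note M2 = mainlem[OF c2 n2 p assms(5,6)]
  show ?thesis
    unfolding A_def B_def Xtilde_def
    using M1[of "2*m"] M1[of "2*m-1"] M2[of "2*m"] M2[of "2*m-1"]
    unfolding e1 e2 by simp
qed

end
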